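(* In a $\$$-bounded contract, let $\mathcal{A}$ be an infinite cluster in $(s,\mathcal{P})$ such that $\mathrm{MEV}_{\mathcal{A}}(s,\mathcal{P})>0$. Then $\mathcal{A}$ is a MEV-attacker in $(s,\mathcal{P})$, i.e. an $f$-attacker for $f(\mathcal{B},s,\mathcal{P})=\mathrm{MEV}_{\mathcal{B}}(s,\mathcal{P})$.
   Context: Fix a countably infinite set $\mathbb{A}$ of actors, a set $\mathbb{T}$ of token types and a set $\mathbb{X}$ of transactions. A wallet is a function $\mathbb{T}\to\mathbb{N}$; $\mathbb{W}_{\mathrm{fin}}$ is the set of finite-support wallets. A wallet state is $W:\mathbb{A}\to(\mathbb{T}\to\mathbb{N})$ satisfying the finite tokens axiom $\sum_{\tau}\sum_{a}W(a)(\tau)\in\mathbb{N}$; wallet states are added pointwise, $W(\mathcal{A})=\sum_{a\in\mathcal{A}}W(a)$, and $\mathrm{own}(W)=\{a:\exists\tau.\,W(a)(\tau)>0\}$. A contract consists of blockchain states $\mathbb{S}=\mathbb{C}\times\mathbb{W}$ (contract state, wallet state), a partial transition function $\mapsto:(\mathbb{S}\times\mathbb{X})\rightharpoonup\mathbb{S}$ and initial states $\mathbb{S}_0$. A transaction $x$ is valid in $s$ if $s\xmapsto{x}s'$ for some $s'$. For finite sequences, $s\xrightarrow{\varepsilon}s$, and $s\xrightarrow{\vec{Y}x}s'$ iff either $s\xrightarrow{\vec{Y}}s''\xmapsto{x}s'$, or $s\xrightarrow{\vec{Y}}s'$ and $x$ is not valid in $s'$. $W(s)$ is the wallet state of $s$;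 $W_{\mathcal{A}}(s)=\sum_{a\in\mathcal{A}}W(s)(a)$. A wealth function is an additive map $\$:\mathbb{W}_{\mathrm{fin}}\to\mathbb{N}$; $\$_{\mathcal{A}}(s)=\$(W_{\mathcal{A}}(s))$; gain $G_{\mathcal{A}}(s,\vec{X})=\$_{\mathcal{A}}(s')-\$_{\mathcal{A}}(s)$ where $s\xrightarrow{\vec X}s'$. The contract is $\$$-bounded if for every $s_0\in\mathbb{S}_0$ there is $n$ such that $\$_{\mathbb{A}}(s)<n$ for all $s$ reachable from $s_0$. A transaction deducibility function $\kappa:\mathcal{P}(\mathbb{A})\times\mathcal{P}(\mathbb{X})\to\mathcal{P}(\mathbb{X})$, $(\mathcal{A},\mathcal{X})\mapsto\kappa_{\mathcal{A}}(\mathcal{X})$, satisfies: extensivity; idempotence; monotonicity in both arguments; continuity on increasing chains; finite causes (every finite $\mathcal{X}_0$ lies in $\kappa_{\mathcal{A}_0}(\emptyset)$ for a finite $\mathcal{A}_0$); private knowledge ($\kappa_{\mathcal{A}}(\emptyset)\subseteq\kappa_{\mathcal{A}'}(\emptyset)\Rightarrow\mathcal{A}\subseteq\mathcal{A}'$); no shared secrets ($\kappa_{\mathcal{A}}(\mathcal{X})\cap\kappa_{\mathcal{B}}(\mathcal{X})\subseteq\kappa_{\mathcal{A}\cap\mathcal{B}}(\mathcal{X})$). $\mathcal{X}^*$ denotes finite sequences over $\mathcal{X}$. $\mathrm{uG}_{\mathcal{A}}(s)=\max\{G_{\mathcal{A}}(s,\vec{Y}):\vec{Y}\in\kappa_{\mathcal{A}}(\emptyset)^*\}$;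 $\mathrm{xG}_{\mathcal{A}}(s,\vec{Y})=G_{\mathcal{A}}(s,\vec{Y})-\mathrm{uG}_{\mathcal{A}}(s)$; $\mathrm{MEV}_{\mathcal{A}}(s,\mathcal{P})=\max\{\mathrm{xG}_{\mathcal{A}}(s,\vec{Y}):\vec{Y}\in\kappa_{\mathcal{A}}(\mathcal{P})^*\}$. A renaming of $\mathcal{A}$ is a permutation $\rho:\mathcal{A}\to\mathcal{A}$ (identity outside $\mathcal{A}$ on sets of actors); $(W\rho)(a)=W(\rho^{-1}(a))$ for $a\in\mathcal{A}$, $W(a)$ otherwise; $(\sigma,W)\rho=(\sigma,W\rho)$. $\mathcal{A}$ is a cluster in $(s,\mathcal{P})$ iff for all renamings $\rho_0,\rho_1$ of $\mathcal{A}$, all $\mathcal{B}\subseteq\mathcal{A}$, $s'$, $\vec{X}$, $\mathcal{Y}\subseteq\mathcal{P}$: if $s\rho_0\xrightarrow{\vec{X}}s'$ with $\vec{X}\in\kappa_{\rho_0(\mathcal{B})}(\mathcal{Y})^*$, then there exist $\vec{X}',r'$ with $s\rho_1\xrightarrow{\vec{X}'}r'$, $\vec{X}'\in\kappa_{\rho_1(\mathcal{B})}(\mathcal{Y})^*$ and $W(r')=(W(s')\rho_0^{-1})\rho_1$. $W'$ is an $(\mathcal{A},\mathcal{B})$-wallet redistribution of $W$ iff there exist $W_{\mathcal{A}},W_{\mathcal{B}},W_{\mathcal{C}}$ with $W=W_{\mathcal{A}}+W_{\mathcal{C}}$, $\mathrm{own}(W_{\mathcal{A}})\subseteq\mathcal{A}$;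 $W'=W_{\mathcal{B}}+W_{\mathcal{C}}$, $\mathrm{own}(W_{\mathcal{B}})\subseteq\mathcal{B}$; $\mathrm{own}(W_{\mathcal{C}})\subseteq\mathbb{A}\setminus(\mathcal{A}\cup\mathcal{B})$; $W_{\mathcal{A}}(\mathbb{A})=W_{\mathcal{B}}(\mathbb{A})$; a state $s'$ is an $(\mathcal{A},\mathcal{B})$-wallet redistribution of $s$ iff this holds for their wallet states and they have the same contract state. For $f:\mathcal{P}(\mathbb{A})\times\mathbb{S}\times\mathcal{P}(\mathbb{X})\to\mathbb{Z}$, an infinite $\mathcal{A}$ is an $f$-attacker in $(s,\mathcal{P})$ if for every infinite $\mathcal{B}\subseteq\mathcal{A}$ there is an $(\mathcal{A},\mathcal{B})$-wallet redistribution $s'$ of $s$ with $f(\mathcal{B},s',\mathcal{P})>0$. *)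

theory Defs
  imports "HOL-Analysis.Analysis" "HOL-Library.Function_Algebras"
begin

(* Types: 'a actors, 't token types, 'x transactions, 'c contract states.
   A blockchain state is a pair (contract state, wallet state). *)

type_synonym ('a,'t) wstate = "'a \<Rightarrow> 't \<Rightarrow> nat"
type_synonym ('c,'a,'t) bstate = "'c \<times> ('a,'t) wstate"

(* finite tokens axiom: sum_tau sum_a W(a)(tau) is a natural number,
   i.e. only finitely many (a,tau) with nonzero amount *)
definition wstate_ok :: "('a,'t) wstate \<Rightarrow> bool" where
  "wstate_ok W \<longleftrightarrow> finite {(a,\<tau>). W a \<tau> \<noteq> 0}"

definition wallet_fin :: "('t \<Rightarrow> nat) \<Rightarrow> bool" where
  "wallet_fin w \<longleftrightarrow> finite {\<tau>. w \<tau> \<noteq> 0}"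

(* W(A) = sum_{a in A} W(a)  (only nonzero summands, which are finitely many
   for a wallet state satisfying the finite tokens axiom) *)
definition wsum :: "('a,'t) wstate \<Rightarrow> 'a set \<Rightarrow> ('t \<Rightarrow> nat)" where
  "wsum W A = (\<lambda>\<tau>. \<Sum>a | a \<in> A \<and> W a \<tau> \<noteq> 0. W a \<tau>)"

definition own :: "('a,'t) wstate \<Rightarrow> 'a set" where
  "own W = {a. \<exists>\<tau>. W a \<tau> > 0}"

definition contract_ok ::
  "(('c,'a,'t) bstate \<Rightarrow> 'x \<Rightarrow> ('c,'a,'t) bstate option) \<Rightarrow> ('c,'a,'t) bstate set \<Rightarrow> bool" where
  "contract_ok step S0 \<longleftrightarrow>
     (\<forall>s\<in>S0. wstate_ok (snd s)) \<and>
     (\<forall>s x s'. wstate_ok (snd s) \<longrightarrow> step s x = Some s' \<longrightarrow> wstate_ok (snd s'))"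

definition run ::
  "(('c,'a,'t) bstate \<Rightarrow> 'x \<Rightarrow> ('c,'a,'t) bstate option) \<Rightarrow> ('c,'a,'t) bstate \<Rightarrow> 'x list \<Rightarrow> ('c,'a,'t) bstate" where
  "run step s xs = foldl (\<lambda>r x. case step r x of None \<Rightarrow> r | Some r' \<Rightarrow> r') s xs"

definition reachable ::
  "(('c,'a,'t) bstate \<Rightarrow> 'x \<Rightarrow> ('c,'a,'t) bstate option) \<Rightarrow> ('c,'a,'t) bstate \<Rightarrow> ('c,'a,'t) bstate \<Rightarrow> bool" where
  "reachable step s0 s \<longleftrightarrow> (\<exists>xs. run step s0 xs = s)"

definition wealth_fn :: "(('t \<Rightarrow> nat) \<Rightarrow> nat) \<Rightarrow> bool" where
  "wealth_fn wl \<longleftrightarrow>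
     (\<forall>w1 w2. wallet_fin w1 \<longrightarrow> wallet_fin w2 \<longrightarrow> wl (w1 + w2) = wl w1 + wl w2)"

definition wealthA :: "(('t \<Rightarrow> nat) \<Rightarrow> nat) \<Rightarrow> 'a set \<Rightarrow> ('c,'a,'t) bstate \<Rightarrow> nat" where
  "wealthA wl A s = wl (wsum (snd s) A)"

definition dollar_bounded ::
  "(('c,'a,'t) bstate \<Rightarrow> 'x \<Rightarrow> ('c,'a,'t) bstate option) \<Rightarrow> ('c,'a,'t) bstate set
    \<Rightarrow> (('t \<Rightarrow> nat) \<Rightarrow> nat) \<Rightarrow> bool" where
  "dollar_bounded step S0 wl \<longleftrightarrow>
     (\<forall>s0\<in>S0. \<exists>n::nat. \<forall>s. reachable step s0 s \<longrightarrow> wealthA wl UNIV s < n)"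

definition gain ::
  "(('c,'a,'t) bstate \<Rightarrow> 'x \<Rightarrow> ('c,'a,'t) bstate option) \<Rightarrow> (('t \<Rightarrow> nat) \<Rightarrow> nat)
    \<Rightarrow> 'a set \<Rightarrow> ('c,'a,'t) bstate \<Rightarrow> 'x list \<Rightarrow> int" where
  "gain step wl A s xs = int (wealthA wl A (run step s xs)) - int (wealthA wl A s)"

definition deducibility :: "('a set \<Rightarrow> 'x set \<Rightarrow> 'x set) \<Rightarrow> bool" where
  "deducibility \<kappa> \<longleftrightarrow>
     (\<forall>A X. X \<subseteq> \<kappa> A X) \<and>
     (\<forall>A X. \<kappa> A (\<kappa> A X) = \<kappa> A X) \<and>
     (\<forall>A A' X X'. A \<subseteq> A' \<longrightarrow> X \<subseteq> X' \<longrightarrow> \<kappa> A X \<subseteq> \<kappa> A' X') \<and>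
     (\<forall>As Xs. incseq As \<longrightarrow> incseq Xs \<longrightarrow>
        \<kappa> (\<Union>i. As i) (\<Union>i. Xs i) = (\<Union>i. \<kappa> (As i) (Xs i))) \<and>
     (\<forall>X0. finite X0 \<longrightarrow> (\<exists>A0. finite A0 \<and> X0 \<subseteq> \<kappa> A0 {})) \<and>
     (\<forall>A A'. \<kappa> A {} \<subseteq> \<kappa> A' {} \<longrightarrow> A \<subseteq> A') \<and>
     (\<forall>A B X. \<kappa> A X \<inter> \<kappa> B X \<subseteq> \<kappa> (A \<inter> B) X)"

definition uG ::
  "(('c,'a,'t) bstate \<Rightarrow> 'x \<Rightarrow> ('c,'a,'t) bstate option) \<Rightarrow> (('t \<Rightarrow> nat) \<Rightarrow> nat)
    \<Rightarrow> ('a set \<Rightarrow> 'x set \<Rightarrow> 'x set) \<Rightarrow> 'a set \<Rightarrow> ('c,'a,'t) bstate \<Rightarrow> int" where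
  "uG step wl \<kappa> A s = Max {gain step wl A s ys | ys. set ys \<subseteq> \<kappa> A {}}"

definition xG ::
  "(('c,'a,'t) bstate \<Rightarrow> 'x \<Rightarrow> ('c,'a,'t) bstate option) \<Rightarrow> (('t \<Rightarrow> nat) \<Rightarrow> nat)
    \<Rightarrow> ('a set \<Rightarrow> 'x set \<Rightarrow> 'x set) \<Rightarrow> 'a set \<Rightarrow> ('c,'a,'t) bstate \<Rightarrow> 'x list \<Rightarrow> int" where
  "xG step wl \<kappa> A s ys = gain step wl A s ys - uG step wl \<kappa> A s"

definition MEV ::
  "(('c,'a,'t) bstate \<Rightarrow> 'x \<Rightarrow> ('c,'a,'t) bstate option) \<Rightarrow> (('t \<Rightarrow> nat) \<Rightarrow> nat)
    \<Rightarrow> ('a set \<Rightarrow> 'x set \<Rightarrow> 'x set) \<Rightarrow> 'a set \<Rightarrow> ('c,'a,'t) bstate \<Rightarrow> 'x set \<Rightarrow> int" where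
  "MEV step wl \<kappa> A s P = Max {xG step wl \<kappa> A s ys | ys. set ys \<subseteq> \<kappa> A P}"

definition renaming :: "'a set \<Rightarrow> ('a \<Rightarrow> 'a) \<Rightarrow> bool" where
  "renaming A \<rho> \<longleftrightarrow> bij \<rho> \<and> (\<forall>a. a \<notin> A \<longrightarrow> \<rho> a = a)"

definition wren :: "('a,'t) wstate \<Rightarrow> 'a set \<Rightarrow> ('a \<Rightarrow> 'a) \<Rightarrow> ('a,'t) wstate" where
  "wren W A \<rho> = (\<lambda>a. if a \<in> A then W (inv \<rho> a) else W a)"

definition sren :: "('c,'a,'t) bstate \<Rightarrow> 'a set \<Rightarrow> ('a \<Rightarrow> 'a) \<Rightarrow> ('c,'a,'t) bstate" where
  "sren s A \<rho> = (fst s, wren (snd s) A \<rho>)"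

definition cluster ::
  "(('c,'a,'t) bstate \<Rightarrow> 'x \<Rightarrow> ('c,'a,'t) bstate option) \<Rightarrow> ('a set \<Rightarrow> 'x set \<Rightarrow> 'x set)
    \<Rightarrow> 'a set \<Rightarrow> ('c,'a,'t) bstate \<Rightarrow> 'x set \<Rightarrow> bool" where
  "cluster step \<kappa> A s P \<longleftrightarrow>
     (\<forall>\<rho>0 \<rho>1 B s' X Y.
        renaming A \<rho>0 \<longrightarrow> renaming A \<rho>1 \<longrightarrow> B \<subseteq> A \<longrightarrow> Y \<subseteq> P \<longrightarrow>
        run step (sren s A \<rho>0) X = s' \<longrightarrow> set X \<subseteq> \<kappa> (\<rho>0 ` B) Y \<longrightarrow>
        (\<exists>X' r'. run step (sren s A \<rho>1) X' = r' \<and> set X' \<subseteq> \<kappa> (\<rho>1 ` B) Y \<and>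
                 snd r' = wren (wren (snd s') A (inv \<rho>0)) A \<rho>1))"

definition wredist :: "'a set \<Rightarrow> 'a set \<Rightarrow> ('a,'t) wstate \<Rightarrow> ('a,'t) wstate \<Rightarrow> bool" where
  "wredist A B W W' \<longleftrightarrow>
     (\<exists>WA WB WC. wstate_ok WA \<and> wstate_ok WB \<and> wstate_ok WC \<and>
        W = WA + WC \<and> own WA \<subseteq> A \<and>
        W' = WB + WC \<and> own WB \<subseteq> B \<and>
        own WC \<subseteq> UNIV - (A \<union> B) \<and>
        wsum WA UNIV = wsum WB UNIV)"

definition sredist :: "'a set \<Rightarrow> 'a set \<Rightarrow> ('c,'a,'t) bstate \<Rightarrow> ('c,'a,'t) bstate \<Rightarrow> bool" where
  "sredist A B s s' \<longleftrightarrow> fst s' = fst s \<and> wredist A B (snd s) (snd s')"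

definition attacker ::
  "('a set \<Rightarrow> ('c,'a,'t) bstate \<Rightarrow> 'x set \<Rightarrow> int) \<Rightarrow> 'a set \<Rightarrow> ('c,'a,'t) bstate \<Rightarrow> 'x set \<Rightarrow> bool" where
  "attacker f A s P \<longleftrightarrow> infinite A \<and>
     (\<forall>B. B \<subseteq> A \<longrightarrow> infinite B \<longrightarrow> (\<exists>s'. sredist A B s s' \<and> f B s' P > 0))"

end

theory Submission
  imports Defs
begin

lemma run_append: "run step s (xs @ ys) = run step (run step s xs) ys"
  by (simp add: run_def)

lemma run_cons: "run step s (x # xs) = run step (case step s x of None \<Rightarrow> s | Some r' \<Rightarrow> r') xs"
  by (simp add: run_def)

lemma run_ok:
  assumes "contract_ok step S0" "wstate_ok (snd s)"
  shows "wstate_ok (snd (run step s xs))"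
  using assms(2)
proof (induction xs arbitrary: s)
  case Nil then show ?case by (simp add: run_def)
next
  case (Cons x xs)
  have "wstate_ok (snd (case step s x of None \<Rightarrow> s | Some r' \<Rightarrow> r'))"
    using Cons.prems assms(1) unfolding contract_ok_def by (cases "step s x") (auto, metis prod.collapse)
  then show ?case using Cons.IH by (simp add: run_cons)
qed

lemma ok_fin_col: "wstate_ok W \<Longrightarrow> finite {a. W a \<tau> \<noteq> 0}"
proof -
  assume "wstate_ok W"
  then have "finite (fst ` {(a,\<tau>). W a \<tau> \<noteq> 0})" unfolding wstate_ok_def by simp
  moreover have "{a. W a \<tau> \<noteq> 0} \<subseteq> fst ` {(a,\<tau>). W a \<tau> \<noteq> 0}" by force
  ultimately show ?thesis using finite_subset by blast
qed

lemma ok_fin_holders: "wstate_ok W \<Longrightarrow> finite {a. \<exists>\<tau>. W a \<tau> \<noteq> 0}"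
proof -
  assume "wstate_ok W"
  then have "finite (fst ` {(a,\<tau>). W a \<tau> \<noteq> 0})" unfolding wstate_ok_def by simp
  moreover have "{a. \<exists>\<tau>. W a \<tau> \<noteq> 0} \<subseteq> fst ` {(a,\<tau>). W a \<tau> \<noteq> 0}" by force
  ultimately show ?thesis using finite_subset by blast
qed

lemma wsum_fin: "wstate_ok W \<Longrightarrow> wallet_fin (wsum W C)"
proof -
  assume ok: "wstate_ok W"
  have "{\<tau>. wsum W C \<tau> \<noteq> 0} \<subseteq> snd ` {(a,\<tau>). W a \<tau> \<noteq> 0}"
  proof
    fix \<tau> assume "\<tau> \<in> {\<tau>. wsum W C \<tau> \<noteq> 0}"
    then have "(\<Sum>a | a \<in> C \<and> W a \<tau> \<noteq> 0. W a \<tau>) \<noteq> 0" by (simp add: wsum_def)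
    then obtain a where "W a \<tau> \<noteq> 0" by (metis (mono_tags, lifting) mem_Collect_eq sum.neutral)
    then show "\<tau> \<in> snd ` {(a,\<tau>). W a \<tau> \<noteq> 0}" by force
  qed
  then show ?thesis using ok unfolding wallet_fin_def wstate_ok_def by (meson finite_imageI finite_subset)
qed

lemma wsum_cong:
  assumes "\<And>a \<tau>. W a \<tau> \<noteq> 0 \<Longrightarrow> (a \<in> C \<longleftrightarrow> a \<in> D)"
  shows "wsum W C = wsum W D"
proof -
  have "\<And>\<tau>. {a. a \<in> C \<and> W a \<tau> \<noteq> 0} = {a. a \<in> D \<and> W a \<tau> \<noteq> 0}" using assms by blast
  then show ?thesis unfolding wsum_def by simp
qed

lemma wsum_split:
  assumes ok: "wstate_ok W" and "C \<subseteq> D"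
  shows "wsum W D = wsum W C + wsum W (D - C)"
proof (rule ext)
  fix \<tau>
  have f: "finite {a. W a \<tau> \<noteq> 0}" using ok_fin_col[OF ok] .
  have e: "{a. a \<in> D \<and> W a \<tau> \<noteq> 0} = {a. a \<in> C \<and> W a \<tau> \<noteq> 0} \<union> {a. a \<in> D - C \<and> W a \<tau> \<noteq> 0}"
    using assms(2) by blast
  have "(\<Sum>a | a \<in> D \<and> W a \<tau> \<noteq> 0. W a \<tau>) =
        (\<Sum>a | a \<in> C \<and> W a \<tau> \<noteq> 0. W a \<tau>) + (\<Sum>a | a \<in> D - C \<and> W a \<tau> \<noteq> 0. W a \<tau>)"
    unfolding e by (rule sum.union_disjoint) (auto intro: finite_subset[OF _ f])
  then show "wsum W D \<tau> = (wsum W C + wsum W (D - C)) \<tau>"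
    by (simp add: wsum_def plus_fun_def)
qed

lemma wl_mono:
  assumes "wealth_fn wl" "wstate_ok W" "C \<subseteq> D"
  shows "wl (wsum W C) \<le> wl (wsum W D)"
proof -
  have "wl (wsum W D) = wl (wsum W C) + wl (wsum W (D - C))"
    using wsum_split[OF assms(2,3)] assms(1) wsum_fin[OF assms(2)] unfolding wealth_fn_def by metis
  then show ?thesis by simp
qed

lemma wsum_comp:
  assumes "inj \<rho>"
  shows "wsum (W \<circ> \<rho>) C = wsum W (\<rho> ` C)"
proof (rule ext)
  fix \<tau>
  have "(\<Sum>a | a \<in> \<rho> ` C \<and> W a \<tau> \<noteq> 0. W a \<tau>) = (\<Sum>b | b \<in> C \<and> W (\<rho> b) \<tau> \<noteq> 0. W (\<rho> b) \<tau>)"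
  proof (rule sum.reindex_cong[where l = \<rho>])
    show "inj_on \<rho> {b. b \<in> C \<and> W (\<rho> b) \<tau> \<noteq> 0}" using assms by (meson inj_on_subset subset_UNIV)
    show "{a. a \<in> \<rho> ` C \<and> W a \<tau> \<noteq> 0} = \<rho> ` {b. b \<in> C \<and> W (\<rho> b) \<tau> \<noteq> 0}" by auto
  qed simp
  then show "wsum (W \<circ> \<rho>) C \<tau> = wsum W (\<rho> ` C) \<tau>" by (simp add: wsum_def)
qed

lemma rho_exists:
  assumes "finite A1" "A1 \<subseteq> A" "B \<subseteq> A" "infinite B"
  shows "\<exists>\<rho>. (\<forall>x. x \<notin> A \<longrightarrow> \<rho> x = x) \<and> (\<forall>x. \<rho> (\<rho> x) = x) \<and> \<rho> ` A1 \<subseteq> B"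
proof -
  define D where "D = A1 - B"
  have fD: "finite D" using assms(1) by (simp add: D_def)
  have "infinite (B - A1)" using assms(1,4) by (simp add: Diff_infinite_finite)
  then obtain E where E: "E \<subseteq> B - A1" "finite E" "card E = card D"
    using infinite_arbitrarily_large by blast
  then obtain g where g: "bij_betw g D E" using finite_same_card_bij fD by metis
  define \<rho> where "\<rho> x = (if x \<in> D then g x else if x \<in> E then inv_into D g x else x)" for x
  have DE: "D \<inter> E = {}" using E(1) D_def by blast
  have gE: "x \<in> D \<Longrightarrow> g x \<in> E" for x using g by (meson bij_betwE)
  have iD: "x \<in> E \<Longrightarrow> inv_into D g x \<in> D" for x using g by (metis bij_betw_def inv_into_into)
  have inv1: "\<rho> (\<rho> x) = x" for x
  proof (cases "x \<in> D")
    case True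
    then show ?thesis using gE DE g unfolding \<rho>_def
      by (auto simp: bij_betw_def inv_into_f_f)
  next
    case False
    show ?thesis
    proof (cases "x \<in> E")
      case True
      then show ?thesis using iD DE g False unfolding \<rho>_def
        by (auto simp: bij_betw_def f_inv_into_f)
    next
      case False
      then show ?thesis using \<open>x \<notin> D\<close> unfolding \<rho>_def by simp
    qed
  qed
  have out: "x \<notin> A \<longrightarrow> \<rho> x = x" for x using E(1) assms(2,3) unfolding \<rho>_def D_def by auto
  have "\<rho> ` A1 \<subseteq> B"
  proof
    fix y assume "y \<in> \<rho> ` A1"
    then obtain x where x: "x \<in> A1" "y = \<rho> x" by blast
    show "y \<in> B"
    proof (cases "x \<in> D")
      case True then show ?thesis using gE E(1) x unfolding \<rho>_def by auto
    next
      case False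
      then have "x \<in> B" "x \<notin> E" using x E(1) D_def by auto
      then show ?thesis using x False unfolding \<rho>_def by auto
    qed
  qed
  then show ?thesis using inv1 out by blast
qed

lemma finite_in_chain:
  assumes "finite F" "F \<subseteq> (\<Union>i. S i)" "incseq S"
  shows "\<exists>N. F \<subseteq> S N"
  using assms
proof (induction F rule: finite_induct)
  case empty then show ?case by blast
next
  case (insert x F)
  then obtain N where N: "F \<subseteq> S N" by blast
  obtain i where i: "x \<in> S i" using insert.prems by blast
  have "S N \<subseteq> S (max N i)" "S i \<subseteq> S (max N i)" using insert.prems(2) by (auto simp: incseq_def)
  then show ?case using N i by blast
qed



lemma max_fin_int:
  assumes "S \<subseteq> {lo..hi::int}" "x \<in> S"
  shows "x \<le> Max S" "finite S" "Max S \<in> S"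
proof -
  show f: "finite S" using assms(1) finite_subset by blast
  show "x \<le> Max S" using f assms(2) by simp
  show "Max S \<in> S" using f assms(2) Max_in by blast
qed

theorem mainTheorem20:
  fixes step :: "('c, 'a, 't) bstate \<Rightarrow> 'x \<Rightarrow> ('c, 'a, 't) bstate option"
    and S0 :: "('c, 'a, 't) bstate set"
    and wl :: "('t \<Rightarrow> nat) \<Rightarrow> nat"
    and \<kappa> :: "'a set \<Rightarrow> 'x set \<Rightarrow> 'x set"
    and A :: "'a set" and s :: "('c, 'a, 't) bstate" and P :: "'x set"
  assumes actors: "countable (UNIV :: 'a set)" "infinite (UNIV :: 'a set)"
    and contract: "contract_ok step S0"
    and wealth: "wealth_fn wl"
    and kappa: "deducibility \<kappa>"
    and bnd: "dollar_bounded step S0 wl"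
    and reach: "\<exists>s0\<in>S0. reachable step s0 s"
    and inf: "infinite A"
    and clu: "cluster step \<kappa> A s P"
    and mev: "MEV step wl \<kappa> A s P > 0"
  shows "attacker (\<lambda>B s' P'. MEV step wl \<kappa> B s' P') A s P"
proof -
  have kmono: "\<And>A A' X X'. A \<subseteq> A' \<Longrightarrow> X \<subseteq> X' \<Longrightarrow> \<kappa> A X \<subseteq> \<kappa> A' X'"
    using kappa[unfolded deducibility_def, THEN conjunct2, THEN conjunct2, THEN conjunct1] by blast
  have kcont: "\<And>As Xs. incseq As \<Longrightarrow> incseq Xs \<Longrightarrow> \<kappa> (\<Union>i. As i) (\<Union>i. Xs i) = (\<Union>i. \<kappa> (As i) (Xs i))"
    using kappa[unfolded deducibility_def, THEN conjunct2, THEN conjunct2, THEN conjunct2, THEN conjunct1] by blast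
  obtain s0 xs0 where s0: "s0 \<in> S0" "run step s0 xs0 = s" using reach unfolding reachable_def by blast
  obtain n where n: "\<And>r. reachable step s0 r \<Longrightarrow> wealthA wl UNIV r < n"
    using bnd s0(1) unfolding dollar_bounded_def by blast
  have ok0: "wstate_ok (snd s0)" using contract s0(1) unfolding contract_ok_def by blast
  have oks: "wstate_ok (snd s)" using run_ok[OF contract ok0] s0(2) by metis
  have okr: "\<And>xs. wstate_ok (snd (run step s xs))" using run_ok[OF contract oks] .
  have bndr: "\<And>xs C. wealthA wl C (run step s xs) < n"
  proof -
    fix xs C
    have "reachable step s0 (run step s xs)" unfolding reachable_def
      using s0(2) run_append by metis
    then have "wealthA wl UNIV (run step s xs) < n" by (rule n)
    moreover have "wealthA wl C (run step s xs) \<le> wealthA wl UNIV (run step s xs)"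
      unfolding wealthA_def using wl_mono[OF wealth okr] by blast
    ultimately show "wealthA wl C (run step s xs) < n" by simp
  qed
  have gainA: "\<And>C ys. gain step wl C s ys \<in> {- int (wealthA wl C s) .. int n}"
  proof -
    fix C ys
    have "wealthA wl C (run step s ys) < n" by (rule bndr)
    then show "gain step wl C s ys \<in> {- int (wealthA wl C s) .. int n}" unfolding gain_def by simp
  qed
  define GAU where "GAU = {gain step wl A s ys | ys. set ys \<subseteq> \<kappa> A {}}"
  have GAU: "GAU \<subseteq> {- int (wealthA wl A s) .. int n}" "gain step wl A s [] \<in> GAU"
  proof -
    show "GAU \<subseteq> {- int (wealthA wl A s) .. int n}"
    proof
      fix g assume "g \<in> GAU"
      then obtain ys where "g = gain step wl A s ys" unfolding GAU_def by blast
      then show "g \<in> {- int (wealthA wl A s) .. int n}" using gainA by simp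
    qed
    show "gain step wl A s [] \<in> GAU" unfolding GAU_def by auto
  qed
  have uGA: "\<And>ys. set ys \<subseteq> \<kappa> A {} \<Longrightarrow> gain step wl A s ys \<le> uG step wl \<kappa> A s"
  proof -
    fix ys assume "set ys \<subseteq> \<kappa> A {}"
    then have "gain step wl A s ys \<in> GAU" unfolding GAU_def by blast
    then have "gain step wl A s ys \<le> Max GAU" by (rule max_fin_int(1)[OF GAU(1)])
    then show "gain step wl A s ys \<le> uG step wl \<kappa> A s" unfolding uG_def GAU_def .
  qed
  define XA where "XA = {xG step wl \<kappa> A s ys | ys. set ys \<subseteq> \<kappa> A P}"
  have XA: "XA \<subseteq> {- int (wealthA wl A s) - uG step wl \<kappa> A s .. int n - uG step wl \<kappa> A s}"
    "xG step wl \<kappa> A s [] \<in> XA"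
  proof -
    show "XA \<subseteq> {- int (wealthA wl A s) - uG step wl \<kappa> A s .. int n - uG step wl \<kappa> A s}"
    proof
      fix g assume "g \<in> XA"
      then obtain ys where "g = xG step wl \<kappa> A s ys" unfolding XA_def by blast
      then show "g \<in> {- int (wealthA wl A s) - uG step wl \<kappa> A s .. int n - uG step wl \<kappa> A s}"
        using gainA[of A ys] unfolding xG_def by simp
    qed
    show "xG step wl \<kappa> A s [] \<in> XA" unfolding XA_def by auto
  qed
  have "Max XA \<in> XA" by (rule max_fin_int(3)[OF XA])
  obtain Y where Y: "set Y \<subseteq> \<kappa> A P" "xG step wl \<kappa> A s Y = MEV step wl \<kappa> A s P"
  proof -
    have m: "MEV step wl \<kappa> A s P = Max XA" unfolding MEV_def XA_def ..
    from \<open>Max XA \<in> XA\<close> obtain ys where "set ys \<subseteq> \<kappa> A P" "Max XA = xG step wl \<kappa> A s ys"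
      unfolding XA_def by blast
    then show ?thesis using that m by simp
  qed
  have Ane: "A \<noteq> {}" using inf by (metis finite.emptyI)
  have Acount: "countable A" by (rule countable_subset[OF subset_UNIV actors(1)])
  define As where "As i = from_nat_into A ` {..i}" for i :: nat
  have incAs: "incseq As" unfolding incseq_def As_def by (intro allI impI image_mono) simp
  have UAs: "(\<Union>i. As i) = A"
  proof
    show "(\<Union>i. As i) \<subseteq> A"
    proof
      fix x assume "x \<in> (\<Union>i. As i)"
      then obtain j where "x = from_nat_into A j" unfolding As_def by blast
      then show "x \<in> A" using from_nat_into[OF Ane] by simp
    qed
    show "A \<subseteq> (\<Union>i. As i)"
    proof
      fix a assume "a \<in> A"
      then have "a \<in> range (from_nat_into A)" using range_from_nat_into[OF Ane Acount] by simp
      then obtain i where "from_nat_into A i = a" by (metis imageE)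
      then show "a \<in> (\<Union>i. As i)" unfolding As_def by blast
    qed
  qed
  have incP: "incseq (\<lambda>_::nat. P)" by (simp add: incseq_def)
  have "\<kappa> (\<Union>i. As i) (\<Union>i::nat. P) = (\<Union>i. \<kappa> (As i) P)" by (rule kcont[OF incAs incP])
  then have "\<kappa> A P = (\<Union>i. \<kappa> (As i) P)" unfolding UAs by simp
  moreover have "incseq (\<lambda>i. \<kappa> (As i) P)" using incAs kmono unfolding incseq_def by blast
  ultimately obtain N where N: "set Y \<subseteq> \<kappa> (As N) P"
    using finite_in_chain[of "set Y" "\<lambda>i. \<kappa> (As i) P"] Y(1) by auto
  define A0 where "A0 = As N"
  have A0: "finite A0" "A0 \<subseteq> A" unfolding A0_def As_def using UAs As_def by auto
  define Yend where "Yend = run step s Y"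
  define A1 where "A1 = A0 \<union> (A \<inter> {a. \<exists>\<tau>. snd s a \<tau> \<noteq> 0}) \<union> (A \<inter> {a. \<exists>\<tau>. snd Yend a \<tau> \<noteq> 0})"
  have A1: "finite A1" "A1 \<subseteq> A"
    unfolding A1_def using A0 ok_fin_holders[OF oks] ok_fin_holders[OF okr, of Y] Yend_def by auto
  have cl: "\<And>\<rho>0 \<rho>1 B' X Y0. renaming A \<rho>0 \<Longrightarrow> renaming A \<rho>1 \<Longrightarrow> B' \<subseteq> A \<Longrightarrow> Y0 \<subseteq> P
     \<Longrightarrow> set X \<subseteq> \<kappa> (\<rho>0 ` B') Y0 \<Longrightarrow> \<exists>X'. set X' \<subseteq> \<kappa> (\<rho>1 ` B') Y0 \<and>
        snd (run step (sren s A \<rho>1) X') = wren (wren (snd (run step (sren s A \<rho>0) X)) A (inv \<rho>0)) A \<rho>1"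
    using clu unfolding cluster_def by blast
  have "\<forall>B. B \<subseteq> A \<longrightarrow> infinite B \<longrightarrow> (\<exists>s'. sredist A B s s' \<and> MEV step wl \<kappa> B s' P > 0)"
  proof (intro allI impI)
    fix B assume B: "B \<subseteq> A" "infinite B"
    obtain \<rho> where \<rho>: "\<And>x. x \<notin> A \<Longrightarrow> \<rho> x = x" "\<And>x. \<rho> (\<rho> x) = x" "\<rho> ` A1 \<subseteq> B"
      using rho_exists[OF A1 B] by blast
    have bij\<rho>: "bij \<rho>" by (metis \<rho>(2) bijI injI surjI)
    have inv\<rho>: "inv \<rho> = \<rho>" by (rule inv_unique_comp) (auto simp: \<rho>(2))
    have ren: "renaming A \<rho>" unfolding renaming_def using bij\<rho> \<rho>(1) by blast
    have renid: "renaming A id" unfolding renaming_def by simp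
    have \<rho>A: "\<And>a. a \<in> A \<Longrightarrow> \<rho> a \<in> A" using \<rho> by metis
    have wren\<rho>: "\<And>W :: ('a,'t) wstate. wren W A \<rho> = W \<circ> \<rho>" unfolding wren_def inv\<rho> using \<rho>(1) by fastforce
    have wren\<rho>': "\<And>W :: ('a,'t) wstate. wren W A (inv \<rho>) = W \<circ> \<rho>" using wren\<rho> inv\<rho> by simp
    have wrenid: "\<And>W :: ('a,'t) wstate. wren W A id = W" unfolding wren_def by (rule ext) simp
    have wrenid': "\<And>W :: ('a,'t) wstate. wren W A (inv id) = W" using wrenid by (simp add: inv_id)
    have srenid: "sren s A id = s" unfolding sren_def wrenid by simp
    define s' where "s' = sren s A \<rho>"
    have s'eq: "s' = (fst s, snd s \<circ> \<rho>)" unfolding s'_def sren_def wren\<rho> ..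
    have inj\<rho>: "inj \<rho>" using bij\<rho> bij_is_inj by blast
    have \<rho>B: "\<rho> ` B \<subseteq> A" using B(1) \<rho>A by blast
    have \<rho>\<rho>B: "\<rho> ` \<rho> ` B = B" using \<rho>(2) by (force simp: image_image)
    have congA: "\<And>V :: ('a,'t) wstate. (\<And>a. a \<in> A \<Longrightarrow> (\<exists>\<tau>. V a \<tau> \<noteq> 0) \<Longrightarrow> a \<in> A1) \<Longrightarrow> wsum (V \<circ> \<rho>) B = wsum V A"
    proof -
      fix V :: "('a,'t) wstate" assume h: "\<And>a. a \<in> A \<Longrightarrow> (\<exists>\<tau>. V a \<tau> \<noteq> 0) \<Longrightarrow> a \<in> A1"
      have "wsum (V \<circ> \<rho>) B = wsum V (\<rho> ` B)" using wsum_comp[OF inj\<rho>] .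
      also have "\<dots> = wsum V A"
      proof (rule wsum_cong)
        fix a \<tau> assume nz: "V a \<tau> \<noteq> 0"
        show "a \<in> \<rho> ` B \<longleftrightarrow> a \<in> A"
        proof
          assume "a \<in> \<rho> ` B" then show "a \<in> A" using \<rho>B by blast
        next
          assume "a \<in> A"
          then have "a \<in> A1" using h nz by blast
          then have "\<rho> a \<in> B" using \<rho>(3) by blast
          then show "a \<in> \<rho> ` B" using \<rho>(2) by (metis image_eqI)
        qed
      qed
      finally show "wsum (V \<circ> \<rho>) B = wsum V A" .
    qed
    have wB0: "wealthA wl B s' = wealthA wl A s"
      unfolding wealthA_def s'eq using congA[of "snd s"] A1_def by auto
    have K: "\<And>Y0 Z. Y0 \<subseteq> P \<Longrightarrow> set Z \<subseteq> \<kappa> B Y0 \<Longrightarrow>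
       \<exists>X'. set X' \<subseteq> \<kappa> A Y0 \<and> wealthA wl B (run step s' Z) \<le> wealthA wl A (run step s X')"
    proof -
      fix Y0 Z assume h: "Y0 \<subseteq> P" "set Z \<subseteq> \<kappa> B Y0"
      have "set Z \<subseteq> \<kappa> (\<rho> ` (\<rho> ` B)) Y0" using h(2) \<rho>\<rho>B by simp
      then obtain X' where X'0: "set X' \<subseteq> \<kappa> (id ` \<rho> ` B) Y0"
        "snd (run step (sren s A id) X') = wren (wren (snd (run step s' Z)) A (inv \<rho>)) A id"
        using cl[OF ren renid \<rho>B h(1)] unfolding s'_def by blast
      define r' where "r' = run step (sren s A id) X'"
      have X': "run step (sren s A id) X' = r'" "set X' \<subseteq> \<kappa> (id ` \<rho> ` B) Y0"
        "snd r' = wren (wren (snd (run step s' Z)) A (inv \<rho>)) A id" using X'0 r'_def by auto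
      have r': "r' = run step s X'" using X'(1) srenid by simp
      have sr': "snd r' = snd (run step s' Z) \<circ> \<rho>" using X'(3) wren\<rho>' wrenid by simp
      have "wsum (snd (run step s' Z)) B = wsum (snd r' \<circ> \<rho>) B"
        using sr' \<rho>(2) by (simp add: comp_def)
      also have "\<dots> = wsum (snd r') (\<rho> ` B)" using wsum_comp[OF inj\<rho>] .
      finally have "wealthA wl B (run step s' Z) \<le> wealthA wl A r'"
        unfolding wealthA_def using wl_mono[OF wealth _ \<rho>B] okr r' by metis
      moreover have "set X' \<subseteq> \<kappa> A Y0" using X'(2) kmono[OF \<rho>B, of Y0 Y0] by auto
      ultimately show "\<exists>X'. set X' \<subseteq> \<kappa> A Y0 \<and> wealthA wl B (run step s' Z) \<le> wealthA wl A (run step s X')"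
        using r' by blast
    qed
    have gainB: "\<And>Y0 Z. Y0 \<subseteq> P \<Longrightarrow> set Z \<subseteq> \<kappa> B Y0 \<Longrightarrow>
       \<exists>X'. set X' \<subseteq> \<kappa> A Y0 \<and> gain step wl B s' Z \<le> gain step wl A s X'
         \<and> gain step wl B s' Z \<in> {- int (wealthA wl A s) .. int n}"
    proof -
      fix Y0 Z assume h: "Y0 \<subseteq> P" "set Z \<subseteq> \<kappa> B Y0"
      obtain X' where X': "set X' \<subseteq> \<kappa> A Y0" "wealthA wl B (run step s' Z) \<le> wealthA wl A (run step s X')"
        using K[OF h] by blast
      have "wealthA wl A (run step s X') < n" using bndr by blast
      then show "\<exists>X'. set X' \<subseteq> \<kappa> A Y0 \<and> gain step wl B s' Z \<le> gain step wl A s X'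
         \<and> gain step wl B s' Z \<in> {- int (wealthA wl A s) .. int n}"
        using X' wB0 unfolding gain_def by (intro exI[of _ X']) auto
    qed
    define GBU where "GBU = {gain step wl B s' ys | ys. set ys \<subseteq> \<kappa> B {}}"
    have GBU: "GBU \<subseteq> {- int (wealthA wl A s) .. int n}" "gain step wl B s' [] \<in> GBU"
    proof -
      show "GBU \<subseteq> {- int (wealthA wl A s) .. int n}"
      proof
        fix g assume "g \<in> GBU"
        then obtain Z where Z: "set Z \<subseteq> \<kappa> B {}" "g = gain step wl B s' Z" unfolding GBU_def by blast
        show "g \<in> {- int (wealthA wl A s) .. int n}" using gainB[of "{}" Z] Z by blast
      qed
      show "gain step wl B s' [] \<in> GBU" unfolding GBU_def by auto
    qed
    have uGB: "uG step wl \<kappa> B s' \<le> uG step wl \<kappa> A s"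
      unfolding uG_def[of _ _ _ B] GBU_def[symmetric]
    proof (rule Max.boundedI)
      show "finite GBU" using max_fin_int(2)[OF GBU] .
      show "GBU \<noteq> {}" using GBU(2) by blast
      fix g assume "g \<in> GBU"
      then obtain Z where Z: "set Z \<subseteq> \<kappa> B {}" "g = gain step wl B s' Z" unfolding GBU_def by blast
      then obtain X' where "set X' \<subseteq> \<kappa> A {}" "g \<le> gain step wl A s X'" using gainB[of "{}" Z] by blast
      then show "g \<le> uG step wl \<kappa> A s" using uGA by fastforce
    qed
    have "set Y \<subseteq> \<kappa> (id ` A1) P" using N kmono[of A0 A1 P P] A0_def A1_def by auto
    then obtain X'' where X''0: "set X'' \<subseteq> \<kappa> (\<rho> ` A1) P"
      "snd (run step (sren s A \<rho>) X'') = wren (wren (snd (run step (sren s A id) Y)) A (inv id)) A \<rho>"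
      using cl[OF renid ren A1(2) order_refl] by blast
    define r'' where "r'' = run step (sren s A \<rho>) X''"
    have X'': "run step (sren s A \<rho>) X'' = r''" "set X'' \<subseteq> \<kappa> (\<rho> ` A1) P"
      "snd r'' = wren (wren (snd Yend) A (inv id)) A \<rho>" using X''0 r''_def srenid Yend_def by auto
    have X''B: "set X'' \<subseteq> \<kappa> B P" using X''(2) kmono[OF \<rho>(3), of P P] by auto
    have sr'': "snd r'' = snd Yend \<circ> \<rho>" using X''(3) wren\<rho> wrenid' by simp
    have "wealthA wl B r'' = wealthA wl A Yend"
      unfolding wealthA_def sr'' using congA[of "snd Yend"] A1_def by auto
    then have gX'': "gain step wl B s' X'' = gain step wl A s Y"
      unfolding gain_def using X''(1) s'_def wB0 Yend_def by simp
    define XB where "XB = {xG step wl \<kappa> B s' ys | ys. set ys \<subseteq> \<kappa> B P}"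
    have XB: "XB \<subseteq> {- int (wealthA wl A s) - uG step wl \<kappa> B s' .. int n - uG step wl \<kappa> B s'}"
    proof
      fix g assume "g \<in> XB"
      then obtain Z where Z: "set Z \<subseteq> \<kappa> B P" "g = xG step wl \<kappa> B s' Z" unfolding XB_def by blast
      have "gain step wl B s' Z \<in> {- int (wealthA wl A s) .. int n}" using gainB[of P Z] Z by blast
      then show "g \<in> {- int (wealthA wl A s) - uG step wl \<kappa> B s' .. int n - uG step wl \<kappa> B s'}"
        using Z(2) unfolding xG_def by simp
    qed
    have inXB: "xG step wl \<kappa> B s' X'' \<in> XB" unfolding XB_def using X''B by blast
    have "xG step wl \<kappa> B s' X'' \<ge> MEV step wl \<kappa> A s P"
      using Y(2) gX'' uGB unfolding xG_def by simp
    then have "MEV step wl \<kappa> B s' P > 0"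
      using max_fin_int(1)[OF XB inXB] mev unfolding MEV_def[of _ _ _ B] XB_def[symmetric] by simp
    moreover have "sredist A B s s'"
    proof -
      define WA :: "('a,'t) wstate" where "WA = (\<lambda>a. if a \<in> A then snd s a else (\<lambda>\<tau>. 0))"
      define WC :: "('a,'t) wstate" where "WC = (\<lambda>a. if a \<in> A then (\<lambda>\<tau>. 0) else snd s a)"
      define WB :: "('a,'t) wstate" where "WB = WA \<circ> \<rho>"
      have okS: "finite {(a,\<tau>). snd s a \<tau> \<noteq> 0}" using oks unfolding wstate_ok_def .
      have okA: "wstate_ok WA" unfolding wstate_ok_def WA_def
        by (rule finite_subset[OF _ okS]) (auto split: if_splits)
      have okC: "wstate_ok WC" unfolding wstate_ok_def WC_def
        by (rule finite_subset[OF _ okS]) (auto split: if_splits)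
      have "{(a,\<tau>). WB a \<tau> \<noteq> 0} \<subseteq> (\<lambda>(a,\<tau>). (\<rho> a, \<tau>)) ` {(a,\<tau>). WA a \<tau> \<noteq> 0}"
      proof
        fix p assume "p \<in> {(a,\<tau>). WB a \<tau> \<noteq> 0}"
        then obtain a \<tau> where "p = (a,\<tau>)" "WA (\<rho> a) \<tau> \<noteq> 0" unfolding WB_def by auto
        then show "p \<in> (\<lambda>(a,\<tau>). (\<rho> a, \<tau>)) ` {(a,\<tau>). WA a \<tau> \<noteq> 0}"
          using \<rho>(2) by (intro image_eqI[of _ _ "(\<rho> a, \<tau>)"]) auto
      qed
      then have okB: "wstate_ok WB" unfolding wstate_ok_def
        using okA unfolding wstate_ok_def by (meson finite_imageI finite_subset)
      have e1: "snd s = WA + WC" unfolding WA_def WC_def by (auto simp: plus_fun_def)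
      have e2: "snd s' = WB + WC" unfolding s'eq WB_def WA_def WC_def
        by (rule ext) (auto simp: plus_fun_def \<rho>A \<rho>(1))
      have o1: "own WA \<subseteq> A" unfolding own_def WA_def by auto
      have o2: "own WB \<subseteq> B"
      proof
        fix a assume "a \<in> own WB"
        then obtain \<tau> where t: "WA (\<rho> a) \<tau> > 0" unfolding own_def WB_def by auto
        then have "\<rho> a \<in> A" "snd s (\<rho> a) \<tau> \<noteq> 0" unfolding WA_def by (auto split: if_splits)
        then have "\<rho> a \<in> A1" unfolding A1_def by blast
        then show "a \<in> B" using \<rho>(3) \<rho>(2) by (metis image_subset_iff)
      qed
      have o3: "own WC \<subseteq> UNIV - (A \<union> B)" unfolding own_def WC_def using B(1) by auto
      have ws: "wsum WA UNIV = wsum WB UNIV"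
        unfolding WB_def wsum_comp[OF inj\<rho>] using bij\<rho> by (simp add: bij_is_surj)
      show ?thesis unfolding sredist_def wredist_def
        using okA okB okC e1 e2 o1 o2 o3 ws s'eq by auto
    qed
    ultimately show "\<exists>s'. sredist A B s s' \<and> MEV step wl \<kappa> B s' P > 0" by blast
  qed
  then show ?thesis unfolding attacker_def using inf by blast
qed

end
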